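(* Let $\mathcal{A}\subseteq\mathcal{B}$ be sub-$\sigma$-algebras of a complete probability space $(\Omega,\mathcal{F},P)$, where $\mathcal{B}$ is generated by a countable family of events (together with the $P$-null events). Let $L$ be a linear subspace of $L_\infty(\mathcal{B})$ and $x:L\to L_\infty(\mathcal{A})$ a monotone linear operator. Assume that \[x(X)\le M(Y)\qquad\text{for all } X\in L,\ Y\in L^+_\infty(\mathcal{B}) \text{ with } X\le Y,\] for some regular, weak $\mathcal{A}$-homogeneous, sublinear operator $M:L^+_\infty(\mathcal{B})\to L^+_\infty(\mathcal{A})$. Then $x$ can be extended to a monotone linear operator $x:L_\infty(\mathcal{B})\to L_\infty(\mathcal{A})$ such that \[x(X)\le M(Y)\qquad\text{for all } X\in L_\infty(\mathcal{B}),\ Y\in L^+_\infty(\mathcal{B}) \text{ with } X\le Y.\] Furthermore, this extension is continuous from above and $\mathcal{A}$-homogeneous.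
   Context: All (in)equalities between random variables hold $P$-a.s. Sublinear: $M(X+Y)\le M(X)+M(Y)$ and $M(\lambda X)=\lambda M(X)$ for real $\lambda\ge0$. Regular: for every nonincreasing sequence $X_n\downarrow0$ $P$-a.s., $M(X_n)\to0$ $P$-a.s. Weak $\mathcal{A}$-homogeneous: $M(1_AX)=1_AM(X)$ for all $A\in\mathcal{A}$ and all $X$ in the domain. $\mathcal{A}$-homogeneous: $x(\lambda X)=\lambda x(X)$ for all $\lambda\in L^+_\infty(\mathcal{A})$. Monotone: $X\ge X'\Rightarrow x(X)\ge x(X')$. Continuous from above: for every nonincreasing sequence $X_n$ with $P$-a.s. limit $X$, $x(X_n)\downarrow x(X)$ $P$-a.s. *)

theory Defs
  imports "HOL-Probability.Probability"
begin

text \<open>Elements of L_infty(N) (w.r.t. the probability measure M), represented by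
  N-measurable, M-essentially bounded real functions; (in)equalities are M-a.s.\<close>
definition Linf :: "'a measure \<Rightarrow> 'a measure \<Rightarrow> ('a \<Rightarrow> real) set" where
  "Linf M N = {f. f \<in> borel_measurable N \<and> (\<exists>c. AE \<omega> in M. \<bar>f \<omega>\<bar> \<le> c)}"

definition Linf_pos :: "'a measure \<Rightarrow> 'a measure \<Rightarrow> ('a \<Rightarrow> real) set" where
  "Linf_pos M N = {f \<in> Linf M N. AE \<omega> in M. 0 \<le> f \<omega>}"

definition respects_ae :: "'a measure \<Rightarrow> ('a \<Rightarrow> real) set \<Rightarrow> (('a \<Rightarrow> real) \<Rightarrow> ('a \<Rightarrow> real)) \<Rightarrow> bool" where
  "respects_ae M D T \<longleftrightarrow> (\<forall>X\<in>D. \<forall>Y\<in>D. (AE \<omega> in M. X \<omega> = Y \<omega>) \<longrightarrow> (AE \<omega> in M. T X \<omega> = T Y \<omega>))"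

definition lin_subspace :: "('a \<Rightarrow> real) set \<Rightarrow> bool" where
  "lin_subspace L \<longleftrightarrow> (\<lambda>_. 0) \<in> L \<and>
     (\<forall>X\<in>L. \<forall>Y\<in>L. \<forall>a b::real. (\<lambda>\<omega>. a * X \<omega> + b * Y \<omega>) \<in> L)"

definition linear_op :: "'a measure \<Rightarrow> ('a \<Rightarrow> real) set \<Rightarrow> (('a \<Rightarrow> real) \<Rightarrow> ('a \<Rightarrow> real)) \<Rightarrow> bool" where
  "linear_op M D T \<longleftrightarrow> (\<forall>X\<in>D. \<forall>Y\<in>D. \<forall>a b::real.
     AE \<omega> in M. T (\<lambda>\<eta>. a * X \<eta> + b * Y \<eta>) \<omega> = a * T X \<omega> + b * T Y \<omega>)"

definition monotone_op :: "'a measure \<Rightarrow> ('a \<Rightarrow> real) set \<Rightarrow> (('a \<Rightarrow> real) \<Rightarrow> ('a \<Rightarrow> real)) \<Rightarrow> bool" where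
  "monotone_op M D T \<longleftrightarrow> (\<forall>X\<in>D. \<forall>Y\<in>D. (AE \<omega> in M. Y \<omega> \<le> X \<omega>) \<longrightarrow> (AE \<omega> in M. T Y \<omega> \<le> T X \<omega>))"

definition sublinear_op :: "'a measure \<Rightarrow> ('a \<Rightarrow> real) set \<Rightarrow> (('a \<Rightarrow> real) \<Rightarrow> ('a \<Rightarrow> real)) \<Rightarrow> bool" where
  "sublinear_op M D T \<longleftrightarrow>
     (\<forall>X\<in>D. \<forall>Y\<in>D. AE \<omega> in M. T (\<lambda>\<eta>. X \<eta> + Y \<eta>) \<omega> \<le> T X \<omega> + T Y \<omega>) \<and>
     (\<forall>X\<in>D. \<forall>c::real. 0 \<le> c \<longrightarrow> (AE \<omega> in M. T (\<lambda>\<eta>. c * X \<eta>) \<omega> = c * T X \<omega>))"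

definition regular_op :: "'a measure \<Rightarrow> ('a \<Rightarrow> real) set \<Rightarrow> (('a \<Rightarrow> real) \<Rightarrow> ('a \<Rightarrow> real)) \<Rightarrow> bool" where
  "regular_op M D T \<longleftrightarrow> (\<forall>Xs. (\<forall>n. Xs n \<in> D) \<longrightarrow>
     (AE \<omega> in M. \<forall>n. Xs (Suc n) \<omega> \<le> Xs n \<omega>) \<longrightarrow>
     (AE \<omega> in M. (\<lambda>n. Xs n \<omega>) \<longlonglongrightarrow> 0) \<longrightarrow>
     (AE \<omega> in M. (\<lambda>n. T (Xs n) \<omega>) \<longlonglongrightarrow> 0))"

definition weak_homogeneous_op :: "'a measure \<Rightarrow> 'a measure \<Rightarrow> ('a \<Rightarrow> real) set \<Rightarrow> (('a \<Rightarrow> real) \<Rightarrow> ('a \<Rightarrow> real)) \<Rightarrow> bool" where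
  "weak_homogeneous_op M A D T \<longleftrightarrow> (\<forall>S\<in>sets A. \<forall>X\<in>D.
     AE \<omega> in M. T (\<lambda>\<eta>. indicator S \<eta> * X \<eta>) \<omega> = indicator S \<omega> * T X \<omega>)"

definition homogeneous_op :: "'a measure \<Rightarrow> 'a measure \<Rightarrow> ('a \<Rightarrow> real) set \<Rightarrow> (('a \<Rightarrow> real) \<Rightarrow> ('a \<Rightarrow> real)) \<Rightarrow> bool" where
  "homogeneous_op M A D T \<longleftrightarrow> (\<forall>l\<in>Linf_pos M A. \<forall>X\<in>D.
     AE \<omega> in M. T (\<lambda>\<eta>. l \<eta> * X \<eta>) \<omega> = l \<omega> * T X \<omega>)"

definition cont_above_op :: "'a measure \<Rightarrow> ('a \<Rightarrow> real) set \<Rightarrow> (('a \<Rightarrow> real) \<Rightarrow> ('a \<Rightarrow> real)) \<Rightarrow> bool" where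
  "cont_above_op M D T \<longleftrightarrow> (\<forall>Xs X. (\<forall>n. Xs n \<in> D) \<longrightarrow> X \<in> D \<longrightarrow>
     (AE \<omega> in M. \<forall>n. Xs (Suc n) \<omega> \<le> Xs n \<omega>) \<longrightarrow>
     (AE \<omega> in M. (\<lambda>n. Xs n \<omega>) \<longlonglongrightarrow> X \<omega>) \<longrightarrow>
     (AE \<omega> in M. (\<forall>n. T (Xs (Suc n)) \<omega> \<le> T (Xs n) \<omega>) \<and> (\<lambda>n. T (Xs n) \<omega>) \<longlonglongrightarrow> T X \<omega>))"

end

theory Submission
  imports Defs
begin


lemma esssup_exists:
  fixes F :: "('a \<Rightarrow> real) set"
  assumes P: "prob_space M" and sub: "subalgebra M A"
    and FA: "F \<subseteq> borel_measurable A" and Fne: "F \<noteq> {}"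
    and g: "g \<in> borel_measurable A" and gb: "\<forall>f\<in>F. AE \<omega> in M. f \<omega> \<le> g \<omega>"
  shows "\<exists>h \<in> borel_measurable A. (\<forall>f\<in>F. AE \<omega> in M. f \<omega> \<le> h \<omega>) \<and>
     (\<forall>u. (\<forall>f\<in>F. AE \<omega> in M. f \<omega> \<le> u \<omega>) \<longrightarrow> (AE \<omega> in M. h \<omega> \<le> u \<omega>))"
proof -
  interpret prob_space M by fact
  obtain f0 where f0: "f0 \<in> F" using Fne by auto
  define g' where "g' = (\<lambda>\<omega>. max (g \<omega>) (f0 \<omega>))"
  define tf where "tf = (\<lambda>f \<omega>. max (f0 \<omega>) (min (f \<omega>) (g' \<omega>)))"
  define H where "H = (\<lambda>G \<omega>. SUP f\<in>G. tf f \<omega>)"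
  define Cs where "Cs = {G. countable G \<and> G \<noteq> {} \<and> G \<subseteq> F}"
  define phi where "phi = (\<lambda>G. integral\<^sup>L M (\<lambda>\<omega>. arctan (H G \<omega>)))"
  have tfle: "tf f \<omega> \<le> g' \<omega>" for f \<omega> unfolding tf_def g'_def by auto
  have bdd: "bdd_above ((\<lambda>f. tf f \<omega>) ` G)" for G \<omega> by (rule bdd_aboveI2[where M="g' \<omega>"]) (rule tfle)
  have f0A: "f0 \<in> borel_measurable A" using f0 FA by auto
  have tfA: "f \<in> F \<Longrightarrow> tf f \<in> borel_measurable A" for f
    unfolding tf_def g'_def using FA f0A g by auto
  have HA: "G \<in> Cs \<Longrightarrow> H G \<in> borel_measurable A" for G
    unfolding H_def Cs_def using tfA bdd by (intro borel_measurable_cSUP) auto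
  have HM: "G \<in> Cs \<Longrightarrow> H G \<in> borel_measurable M" for G
    using HA measurable_from_subalg[OF sub] by blast
  have abs_arctan_le: "norm (arctan y) \<le> pi/2" for y
    using arctan_lbound[of y] arctan_ubound[of y] by simp
  have intg: "G \<in> Cs \<Longrightarrow> integrable M (\<lambda>\<omega>. arctan (H G \<omega>))" for G
    apply (rule integrable_const_bound[where B="pi/2"])
    using HM abs_arctan_le by (auto intro!: AE_I2)
  have Hmono: "G1 \<in> Cs \<Longrightarrow> G1 \<subseteq> G2 \<Longrightarrow> H G1 \<omega> \<le> H G2 \<omega>" for G1 G2 \<omega>
    unfolding H_def Cs_def by (rule cSUP_subset_mono) (auto intro: bdd)
  have phimono: "G1 \<in> Cs \<Longrightarrow> G2 \<in> Cs \<Longrightarrow> G1 \<subseteq> G2 \<Longrightarrow> phi G1 \<le> phi G2" for G1 G2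
    unfolding phi_def using intg Hmono by (intro integral_mono) (auto intro: arctan_monotone')
  have phile: "G \<in> Cs \<Longrightarrow> phi G \<le> pi/2" for G
  proof -
    assume G: "G \<in> Cs"
    have "phi G \<le> integral\<^sup>L M (\<lambda>_. pi/2)"
      unfolding phi_def using intg[OF G] arctan_ubound by (intro integral_mono) (auto intro: less_imp_le)
    also have "\<dots> = pi/2" by (simp add: prob_space)
    finally show ?thesis .
  qed
  have Csne: "Cs \<noteq> {}" using f0 unfolding Cs_def by (auto intro!: exI[of _ "{f0}"])
  have bddphi: "bdd_above (phi ` Cs)" by (rule bdd_aboveI2[where M="pi/2"]) (rule phile)
  define s where "s = (SUP G\<in>Cs. phi G)"
  have "\<forall>n::nat. \<exists>G\<in>Cs. s - 1/(real n + 1) < phi G"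
  proof
    fix n :: nat
    have "s - 1/(real n + 1) < s" by simp
    then show "\<exists>G\<in>Cs. s - 1/(real n + 1) < phi G"
      unfolding s_def using less_cSUP_iff[OF Csne bddphi] by blast
  qed
  then obtain Gn where Gn: "\<And>n. Gn n \<in> Cs" "\<And>n. s - 1/(real n + 1) < phi (Gn n)" by metis
  define Gi where "Gi = (\<Union>n. Gn n)"
  have Gi: "Gi \<in> Cs" using Gn(1) unfolding Gi_def Cs_def by auto
  have "phi Gi \<le> s" unfolding s_def using Gi bddphi by (rule cSUP_upper)
  moreover have "s - 1/(real n + 1) < phi Gi" for n
  proof -
    have "Gn n \<subseteq> Gi" unfolding Gi_def by auto
    then show ?thesis using Gn[of n] phimono[OF Gn(1) Gi, of n] by linarith
  qed
  ultimately have phiGi: "phi Gi = s"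
  proof -
    assume a: "phi Gi \<le> s" and b: "\<And>n. s - 1/(real n + 1) < phi Gi"
    show ?thesis
    proof (rule ccontr)
      assume "phi Gi \<noteq> s"
      then have "0 < s - phi Gi" using a by auto
      then obtain n where "inverse (real (Suc n)) < s - phi Gi" using reals_Archimedean by blast
      with b[of n] show False by (simp add: field_simps)
    qed
  qed
  define h where "h = H Gi"
  have ub: "AE \<omega> in M. f \<omega> \<le> h \<omega>" if f: "f \<in> F" for f
  proof -
    define G2 where "G2 = insert f Gi"
    have G2: "G2 \<in> Cs" using Gi f unfolding G2_def Cs_def by auto
    have le: "H Gi \<omega> \<le> H G2 \<omega>" for \<omega> using Hmono[OF Gi, of G2] unfolding G2_def by blast
    have "phi G2 \<le> s" unfolding s_def using G2 bddphi by (rule cSUP_upper)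
    then have "integral\<^sup>L M (\<lambda>\<omega>. arctan (H G2 \<omega>) - arctan (H Gi \<omega>)) \<le> 0"
      using phiGi intg[OF G2] intg[OF Gi] unfolding phi_def by simp
    moreover have "integral\<^sup>L M (\<lambda>\<omega>. arctan (H G2 \<omega>) - arctan (H Gi \<omega>)) \<ge> 0"
      using le by (intro integral_nonneg_AE) (auto intro: arctan_monotone')
    ultimately have "integral\<^sup>L M (\<lambda>\<omega>. arctan (H G2 \<omega>) - arctan (H Gi \<omega>)) = 0" by simp
    then have "AE \<omega> in M. arctan (H G2 \<omega>) - arctan (H Gi \<omega>) = 0"
      using intg[OF G2] intg[OF Gi] le
      by (subst (asm) integral_nonneg_eq_0_iff_AE) (auto intro: arctan_monotone')
    moreover have "AE \<omega> in M. f \<omega> \<le> g \<omega>" using gb f by auto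
    ultimately show ?thesis
    proof eventually_elim
      case (elim \<omega>)
      then have e: "H G2 \<omega> = H Gi \<omega>" by (simp add: arctan_eq_iff)
      have "tf f \<omega> \<le> H G2 \<omega>" unfolding H_def G2_def by (rule cSUP_upper) (auto intro: bdd)
      moreover have "f \<omega> \<le> tf f \<omega>" using elim unfolding tf_def g'_def by auto
      ultimately show ?case using e unfolding h_def by simp
    qed
  qed
  have least: "AE \<omega> in M. h \<omega> \<le> u \<omega>" if u: "\<forall>f\<in>F. AE \<omega> in M. f \<omega> \<le> u \<omega>" for u
  proof -
    have cG: "countable Gi" and GF: "Gi \<subseteq> F" and Gne: "Gi \<noteq> {}" using Gi unfolding Cs_def by auto
    have "AE \<omega> in M. \<forall>f\<in>Gi. f \<omega> \<le> u \<omega>" using u GF by (intro AE_ball_countable') (auto intro: cG)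
    moreover have "AE \<omega> in M. f0 \<omega> \<le> u \<omega>" using u f0 by auto
    ultimately show ?thesis
    proof eventually_elim
      case (elim \<omega>)
      show ?case unfolding h_def H_def
        using elim Gne by (intro cSUP_least) (auto simp: tf_def)
    qed
  qed
  show ?thesis using HA[OF Gi] ub least unfolding h_def by blast
qed




lemma LinfI: "f \<in> borel_measurable N \<Longrightarrow> (AE \<omega> in M. \<bar>f \<omega>\<bar> \<le> c) \<Longrightarrow> f \<in> Linf M N"
  unfolding Linf_def by auto

lemma LinfD: "f \<in> Linf M N \<Longrightarrow> f \<in> borel_measurable N"
  unfolding Linf_def by auto

lemma LinfE: "f \<in> Linf M N \<Longrightarrow> (\<And>c. (AE \<omega> in M. \<bar>f \<omega>\<bar> \<le> c) \<Longrightarrow> P) \<Longrightarrow> P"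
  unfolding Linf_def by auto

lemma Linf_comb: assumes "X \<in> Linf M N" "Y \<in> Linf M N"
  shows "(\<lambda>\<omega>. a * X \<omega> + b * Y \<omega>) \<in> Linf M N"
proof -
  obtain c1 where c1: "AE \<omega> in M. \<bar>X \<omega>\<bar> \<le> c1" using assms(1) by (rule LinfE)
  obtain c2 where c2: "AE \<omega> in M. \<bar>Y \<omega>\<bar> \<le> c2" using assms(2) by (rule LinfE)
  have m: "X \<in> borel_measurable N" "Y \<in> borel_measurable N" using assms by (auto dest: LinfD)
  show ?thesis
  proof (rule LinfI[where c="\<bar>a\<bar> * c1 + \<bar>b\<bar> * c2"])
    show "(\<lambda>\<omega>. a * X \<omega> + b * Y \<omega>) \<in> borel_measurable N" using m by measurable
    show "AE \<omega> in M. \<bar>a * X \<omega> + b * Y \<omega>\<bar> \<le> \<bar>a\<bar> * c1 + \<bar>b\<bar> * c2"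
      using c1 c2
    proof eventually_elim
      case (elim \<omega>)
      have "\<bar>a * X \<omega> + b * Y \<omega>\<bar> \<le> \<bar>a\<bar> * \<bar>X \<omega>\<bar> + \<bar>b\<bar> * \<bar>Y \<omega>\<bar>"
        by (simp add: abs_mult[symmetric] abs_triangle_ineq)
      also have "\<dots> \<le> \<bar>a\<bar> * c1 + \<bar>b\<bar> * c2"
        using elim by (intro add_mono mult_left_mono) auto
      finally show ?case .
    qed
  qed
qed

lemma Linf_mult: assumes "X \<in> Linf M N" "Y \<in> Linf M N"
  shows "(\<lambda>\<omega>. X \<omega> * Y \<omega>) \<in> Linf M N"
proof -
  obtain c1 where c1: "AE \<omega> in M. \<bar>X \<omega>\<bar> \<le> c1" using assms(1) by (rule LinfE)
  obtain c2 where c2: "AE \<omega> in M. \<bar>Y \<omega>\<bar> \<le> c2" using assms(2) by (rule LinfE)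
  have m: "X \<in> borel_measurable N" "Y \<in> borel_measurable N" using assms by (auto dest: LinfD)
  show ?thesis
  proof (rule LinfI[where c="c1 * c2"])
    show "(\<lambda>\<omega>. X \<omega> * Y \<omega>) \<in> borel_measurable N" using m by measurable
    show "AE \<omega> in M. \<bar>X \<omega> * Y \<omega>\<bar> \<le> c1 * c2"
      using c1 c2 by eventually_elim (auto simp: abs_mult intro: mult_mono)
  qed
qed

lemma Linf_const: "(\<lambda>_. c) \<in> Linf M N"
  by (rule LinfI[where c="\<bar>c\<bar>"]) auto

lemma Linf_fun: assumes "X \<in> Linf M N" "\<And>t. \<bar>f t\<bar> \<le> \<bar>t\<bar>" "f \<in> borel_measurable borel"
  shows "(\<lambda>\<omega>. f (X \<omega>)) \<in> Linf M N"
proof -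
  obtain c1 where c1: "AE \<omega> in M. \<bar>X \<omega>\<bar> \<le> c1" using assms(1) by (rule LinfE)
  have m: "X \<in> borel_measurable N" using assms by (auto dest: LinfD)
  show ?thesis
    apply (rule LinfI[where c="c1"])
    using m assms(3) apply measurable
    using c1 by eventually_elim (use assms(2) order_trans in blast)
qed

lemma Linf_pos_max0: "X \<in> Linf M N \<Longrightarrow> (\<lambda>\<omega>. max 0 (X \<omega>)) \<in> Linf_pos M N"
  unfolding Linf_pos_def by (auto intro!: Linf_fun[where f="\<lambda>t. max 0 t"])

lemma Linf_abs: "X \<in> Linf M N \<Longrightarrow> (\<lambda>\<omega>. \<bar>X \<omega>\<bar>) \<in> Linf M N"
  by (auto intro!: Linf_fun[where f="\<lambda>t. \<bar>t\<bar>"])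

lemma Linf_pos_Linf: "X \<in> Linf_pos M N \<Longrightarrow> X \<in> Linf M N"
  unfolding Linf_pos_def by auto

lemma Linf_sub: assumes "space A = space B" "sets A \<subseteq> sets B" "X \<in> Linf M A"
  shows "X \<in> Linf M B"
proof -
  have "subalgebra B A" unfolding subalgebra_def using assms by auto
  then show ?thesis using assms(3) measurable_from_subalg unfolding Linf_def by blast
qed




locale ext_setting =
  fixes M A B :: "'a measure" and L :: "('a \<Rightarrow> real) set"
    and x Mop :: "('a \<Rightarrow> real) \<Rightarrow> ('a \<Rightarrow> real)"
  assumes P: "prob_space M" and subA: "subalgebra M A" and subB: "subalgebra M B"
    and AB: "sets A \<subseteq> sets B"
    and linL: "lin_subspace L" and LB: "L \<subseteq> Linf M B"
    and xA: "\<forall>X\<in>L. x X \<in> Linf M A" and linx: "linear_op M L x"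
    and MopA: "\<forall>Y\<in>Linf_pos M B. Mop Y \<in> Linf_pos M A"
    and reg: "regular_op M (Linf_pos M B) Mop"
    and whom: "weak_homogeneous_op M A (Linf_pos M B) Mop"
    and subl: "sublinear_op M (Linf_pos M B) Mop"
    and dom: "\<forall>X\<in>L. \<forall>Y\<in>Linf_pos M B. (AE \<omega> in M. X \<omega> \<le> Y \<omega>) \<longrightarrow> (AE \<omega> in M. x X \<omega> \<le> Mop Y \<omega>)"
begin

definition good :: "(('a \<Rightarrow> real) \<times> ('a \<Rightarrow> real)) set \<Rightarrow> bool" where
  "good G \<longleftrightarrow> lin_subspace (fst ` G) \<and> L \<subseteq> fst ` G \<and> fst ` G \<subseteq> Linf M B \<and>
    (\<forall>X u. (X,u) \<in> G \<longrightarrow> u \<in> Linf M A) \<and>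
    (\<forall>X u. (X,u) \<in> G \<longrightarrow> X \<in> L \<longrightarrow> (AE \<omega> in M. u \<omega> = x X \<omega>)) \<and>
    (\<forall>X u Y v a b w. (X,u) \<in> G \<longrightarrow> (Y,v) \<in> G \<longrightarrow> ((\<lambda>\<eta>. a * X \<eta> + b * Y \<eta>), w) \<in> G \<longrightarrow>
        (AE \<omega> in M. w \<omega> = a * u \<omega> + b * v \<omega>)) \<and>
    (\<forall>X u Y. (X,u) \<in> G \<longrightarrow> Y \<in> Linf_pos M B \<longrightarrow> (AE \<omega> in M. X \<omega> \<le> Y \<omega>) \<longrightarrow>
        (AE \<omega> in M. u \<omega> \<le> Mop Y \<omega>))"

lemma spaceA: "space A = space M" using subA unfolding subalgebra_def by auto
lemma spaceB: "space B = space M" using subB unfolding subalgebra_def by auto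

lemma LinfAB: "X \<in> Linf M A \<Longrightarrow> X \<in> Linf M B"
  using Linf_sub[OF _ AB] spaceA spaceB by auto

lemma Mop_scale: "Y \<in> Linf_pos M B \<Longrightarrow> 0 \<le> c \<Longrightarrow> AE \<omega> in M. Mop (\<lambda>\<eta>. c * Y \<eta>) \<omega> = c * Mop Y \<omega>"
  using subl unfolding sublinear_op_def by blast

lemma Mop0: "AE \<omega> in M. Mop (\<lambda>_. 0) \<omega> = 0"
proof -
  have z: "(\<lambda>_. 0::real) \<in> Linf_pos M B" unfolding Linf_pos_def by (auto intro: Linf_const)
  show ?thesis using Mop_scale[OF z, of 0] by simp
qed

lemma Mop_add: "Y \<in> Linf_pos M B \<Longrightarrow> Y' \<in> Linf_pos M B \<Longrightarrow> AE \<omega> in M. Mop (\<lambda>\<eta>. Y \<eta> + Y' \<eta>) \<omega> \<le> Mop Y \<omega> + Mop Y' \<omega>"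
  using subl unfolding sublinear_op_def by blast

lemma Linf_pos_add: "Y \<in> Linf_pos M N \<Longrightarrow> Y' \<in> Linf_pos M N \<Longrightarrow> (\<lambda>\<eta>. Y \<eta> + Y' \<eta>) \<in> Linf_pos M N"
  unfolding Linf_pos_def using Linf_comb[of Y M N Y' 1 1] by auto

lemma Linf_pos_scale: "Y \<in> Linf_pos M N \<Longrightarrow> 0 \<le> c \<Longrightarrow> (\<lambda>\<eta>. c * Y \<eta>) \<in> Linf_pos M N"
  unfolding Linf_pos_def using Linf_comb[of Y M N Y c 0] by auto

definition G0 where "G0 = {(X, x X) | X. X \<in> L}"

lemma good_G0: "good G0"
proof -
  have fG0: "fst ` G0 = L" unfolding G0_def by force
  show ?thesis unfolding good_def fG0
  proof (intro conjI allI impI)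
    show "lin_subspace L" by (rule linL)
    show "L \<subseteq> L" by simp
    show "L \<subseteq> Linf M B" by (rule LB)
  next
    fix X u assume "(X,u) \<in> G0" then show "u \<in> Linf M A" using xA unfolding G0_def by auto
  next
    fix X u assume "(X,u) \<in> G0" then show "AE \<omega> in M. u \<omega> = x X \<omega>" unfolding G0_def by auto
  next
    fix X u Y v a b w assume "(X,u) \<in> G0" "(Y,v) \<in> G0" "((\<lambda>\<eta>. a * X \<eta> + b * Y \<eta>), w) \<in> G0"
    then show "AE \<omega> in M. w \<omega> = a * u \<omega> + b * v \<omega>" using linx unfolding G0_def linear_op_def by auto
  next
    fix X u Y assume "(X,u) \<in> G0" "Y \<in> Linf_pos M B" "AE \<omega> in M. X \<omega> \<le> Y \<omega>"
    then show "AE \<omega> in M. u \<omega> \<le> Mop Y \<omega>" using dom unfolding G0_def by auto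
  qed
qed

lemma goodI:
  assumes "lin_subspace (fst ` G)" "L \<subseteq> fst ` G" "fst ` G \<subseteq> Linf M B"
    "\<And>X u. (X,u) \<in> G \<Longrightarrow> u \<in> Linf M A"
    "\<And>X u. (X,u) \<in> G \<Longrightarrow> X \<in> L \<Longrightarrow> (AE \<omega> in M. u \<omega> = x X \<omega>)"
    "\<And>X u Y v a b w. (X,u) \<in> G \<Longrightarrow> (Y,v) \<in> G \<Longrightarrow> ((\<lambda>\<eta>. a * X \<eta> + b * Y \<eta>), w) \<in> G \<Longrightarrow>
        (AE \<omega> in M. w \<omega> = a * u \<omega> + b * v \<omega>)"
    "\<And>X u Y. (X,u) \<in> G \<Longrightarrow> Y \<in> Linf_pos M B \<Longrightarrow> (AE \<omega> in M. X \<omega> \<le> Y \<omega>) \<Longrightarrow>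
        (AE \<omega> in M. u \<omega> \<le> Mop Y \<omega>)"
  shows "good G"
  unfolding good_def using assms by blast

lemma good_sub: "good G \<Longrightarrow> lin_subspace (fst ` G)" unfolding good_def by blast
lemma good_L: "good G \<Longrightarrow> L \<subseteq> fst ` G" unfolding good_def by blast
lemma good_B: "good G \<Longrightarrow> fst ` G \<subseteq> Linf M B" unfolding good_def by blast
lemma good_A: "good G \<Longrightarrow> (X,u) \<in> G \<Longrightarrow> u \<in> Linf M A" unfolding good_def by blast
lemma good_x: "good G \<Longrightarrow> (X,u) \<in> G \<Longrightarrow> X \<in> L \<Longrightarrow> (AE \<omega> in M. u \<omega> = x X \<omega>)" unfolding good_def by blast
lemma good_lin: "good G \<Longrightarrow> (X,u) \<in> G \<Longrightarrow> (Y,v) \<in> G \<Longrightarrow> ((\<lambda>\<eta>. a * X \<eta> + b * Y \<eta>), w) \<in> G \<Longrightarrow>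
        (AE \<omega> in M. w \<omega> = a * u \<omega> + b * v \<omega>)" unfolding good_def by blast
lemma good_dom: "good G \<Longrightarrow> (X,u) \<in> G \<Longrightarrow> Y \<in> Linf_pos M B \<Longrightarrow> (AE \<omega> in M. X \<omega> \<le> Y \<omega>) \<Longrightarrow>
        (AE \<omega> in M. u \<omega> \<le> Mop Y \<omega>)" unfolding good_def by blast
lemma good_0: "good G \<Longrightarrow> (\<lambda>_. 0) \<in> fst ` G" using good_sub unfolding lin_subspace_def by blast
lemma good_comb: "good G \<Longrightarrow> X \<in> fst ` G \<Longrightarrow> Y \<in> fst ` G \<Longrightarrow> (\<lambda>\<omega>. a * X \<omega> + b * Y \<omega>) \<in> fst ` G"
  using good_sub unfolding lin_subspace_def by blast

lemma chain3:
  assumes "chain\<^sub>\<subseteq> C" "G1 \<in> C" "G2 \<in> C" "G3 \<in> C"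
  shows "\<exists>G\<in>C. G1 \<subseteq> G \<and> G2 \<subseteq> G \<and> G3 \<subseteq> G"
proof -
  have t: "\<And>P Q. P \<in> C \<Longrightarrow> Q \<in> C \<Longrightarrow> P \<subseteq> Q \<or> Q \<subseteq> P" using assms(1) unfolding chain_subset_def by blast
  show ?thesis
  proof (cases "G1 \<subseteq> G2")
    case True
    then show ?thesis using t[OF assms(3,4)] assms by blast
  next
    case False
    then have "G2 \<subseteq> G1" using t[OF assms(2,3)] by blast
    then show ?thesis using t[OF assms(2,4)] assms by blast
  qed
qed

lemma good_Union:
  assumes C: "C \<in> chains {G. good G}" and ne: "C \<noteq> {}"
  shows "good (\<Union>C)"
proof -
  have Cg: "\<And>G. G \<in> C \<Longrightarrow> good G" and ch: "chain\<^sub>\<subseteq> C" using C unfolding chains_def by auto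
  obtain G0 where G0: "G0 \<in> C" using ne by auto
  show ?thesis
  proof (rule goodI)
    show "lin_subspace (fst ` \<Union>C)" unfolding lin_subspace_def
    proof (intro conjI ballI allI)
      have "(\<lambda>_. 0) \<in> fst ` G0" using good_0[OF Cg[OF G0]] .
      then show "(\<lambda>_. 0) \<in> fst ` \<Union>C" using G0 by blast
    next
      fix X Y a b assume "X \<in> fst ` \<Union>C" "Y \<in> fst ` \<Union>C"
      then obtain G1 G2 where "G1 \<in> C" "G2 \<in> C" "X \<in> fst ` G1" "Y \<in> fst ` G2" by auto
      moreover obtain G where "G \<in> C" "G1 \<subseteq> G" "G2 \<subseteq> G" using chain3[OF ch \<open>G1 \<in> C\<close> \<open>G2 \<in> C\<close> \<open>G2 \<in> C\<close>] by auto
      ultimately have "X \<in> fst ` G" "Y \<in> fst ` G" by auto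
      then have "(\<lambda>\<omega>. a * X \<omega> + b * Y \<omega>) \<in> fst ` G" using good_comb[OF Cg[OF \<open>G \<in> C\<close>]] by blast
      then show "(\<lambda>\<omega>. a * X \<omega> + b * Y \<omega>) \<in> fst ` \<Union>C" using \<open>G \<in> C\<close> by auto
    qed
  next
    show "L \<subseteq> fst ` \<Union>C" using good_L[OF Cg[OF G0]] G0 by blast
  next
    show "fst ` \<Union>C \<subseteq> Linf M B" using good_B[OF Cg] by blast
  next
    fix X u assume "(X,u) \<in> \<Union>C" then show "u \<in> Linf M A" using good_A[OF Cg] by blast
  next
    fix X u assume "(X,u) \<in> \<Union>C" "X \<in> L" then show "AE \<omega> in M. u \<omega> = x X \<omega>" using good_x[OF Cg] by blast
  next
    fix X u Y v a b w assume h: "(X,u) \<in> \<Union>C" "(Y,v) \<in> \<Union>C" "((\<lambda>\<eta>. a * X \<eta> + b * Y \<eta>), w) \<in> \<Union>C"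
    then obtain G1 G2 G3 where "G1 \<in> C" "G2 \<in> C" "G3 \<in> C" "(X,u) \<in> G1" "(Y,v) \<in> G2" "((\<lambda>\<eta>. a * X \<eta> + b * Y \<eta>), w) \<in> G3"
      by auto
    moreover obtain G where "G \<in> C" "G1 \<subseteq> G" "G2 \<subseteq> G" "G3 \<subseteq> G" using chain3[OF ch \<open>G1 \<in> C\<close> \<open>G2 \<in> C\<close> \<open>G3 \<in> C\<close>] by auto
    ultimately show "AE \<omega> in M. w \<omega> = a * u \<omega> + b * v \<omega>" using good_lin[OF Cg[OF \<open>G \<in> C\<close>]] by blast
  next
    fix X u Y assume "(X,u) \<in> \<Union>C" "Y \<in> Linf_pos M B" "AE \<omega> in M. X \<omega> \<le> Y \<omega>"
    then show "AE \<omega> in M. u \<omega> \<le> Mop Y \<omega>" using good_dom[OF Cg] by blast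
  qed
qed

end



context ext_setting begin

lemma good_scale: assumes g: "good G" and Xu: "(X,u) \<in> G"
  shows "\<exists>u'. ((\<lambda>\<eta>. r * X \<eta>), u') \<in> G \<and> (AE \<omega> in M. u' \<omega> = r * u \<omega>)"
proof -
  have "X \<in> fst ` G" using Xu by force
  then have "(\<lambda>\<eta>. r * X \<eta> + 0 * X \<eta>) \<in> fst ` G" using good_comb[OF g] by blast
  then obtain u' where u': "((\<lambda>\<eta>. r * X \<eta>), u') \<in> G" by auto
  then have "((\<lambda>\<eta>. r * X \<eta> + 0 * X \<eta>), u') \<in> G" by simp
  from good_lin[OF g Xu Xu this] have "AE \<omega> in M. u' \<omega> = r * u \<omega>" by simp
  with u' show ?thesis by blast
qed

lemma good_zero: assumes g: "good G" and h: "((\<lambda>_. 0), u) \<in> G"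
  shows "AE \<omega> in M. u \<omega> = 0"
proof -
  have "((\<lambda>\<eta>. 0 * (\<lambda>_. 0::real) \<eta> + 0 * (\<lambda>_. 0::real) \<eta>), u) \<in> G" using h by simp
  from good_lin[OF g h h this] show ?thesis by simp
qed

lemma uniq:
  assumes g: "good G" and Z: "Z \<notin> fst ` G" and U1: "U1 \<in> fst ` G" and U2: "U2 \<in> fst ` G"
    and eq: "(\<lambda>\<eta>. U1 \<eta> + t1 * Z \<eta>) = (\<lambda>\<eta>. U2 \<eta> + t2 * Z \<eta>)"
  shows "t1 = t2 \<and> U1 = U2"
proof -
  have pt: "U1 \<eta> + t1 * Z \<eta> = U2 \<eta> + t2 * Z \<eta>" for \<eta> using fun_cong[OF eq, of \<eta>] by simp
  show ?thesis
  proof (cases "t1 = t2")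
    case True
    then show ?thesis using pt by auto
  next
    case False
    have "Z = (\<lambda>\<eta>. (1/(t2 - t1)) * U1 \<eta> + (-1/(t2-t1)) * U2 \<eta>)"
    proof
      fix \<eta>
      have "(t2 - t1) * Z \<eta> = U1 \<eta> - U2 \<eta>" using pt[of \<eta>] by (simp add: algebra_simps)
      moreover have d: "t2 - t1 \<noteq> 0" using False by simp
      ultimately have "Z \<eta> = (U1 \<eta> - U2 \<eta>)/(t2-t1)" by (simp add: eq_divide_eq mult.commute)
      also have "\<dots> = (1/(t2 - t1)) * U1 \<eta> + (-1/(t2-t1)) * U2 \<eta>" by (simp add: diff_divide_distrib)
      finally show "Z \<eta> = (1/(t2 - t1)) * U1 \<eta> + (-1/(t2-t1)) * U2 \<eta>" .
    qed
    moreover have "(\<lambda>\<eta>. (1/(t2 - t1)) * U1 \<eta> + (-1/(t2-t1)) * U2 \<eta>) \<in> fst ` G"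
      using good_comb[OF g U1 U2] by blast
    ultimately show ?thesis using Z by simp
  qed
qed

end



context ext_setting begin

lemma extend:
  assumes g: "good G" and ZB: "Z \<in> Linf M B" and Z: "Z \<notin> fst ` G"
  shows "\<exists>G'. good G' \<and> G \<subseteq> G' \<and> Z \<in> fst ` G'"
proof -
  interpret prob_space M by (rule P)
  obtain u0 where u0: "((\<lambda>_. 0), u0) \<in> G" using good_0[OF g] by auto
  have u00: "AE \<omega> in M. u0 \<omega> = 0" by (rule good_zero[OF g u0])
  define Lo where "Lo = {(\<lambda>\<omega>. w \<omega> - Mop Y' \<omega>) | W w Y'. (W,w) \<in> G \<and> Y' \<in> Linf_pos M B \<and> (AE \<omega> in M. W \<omega> - Z \<omega> \<le> Y' \<omega>)}"
  define Up where "Up = {(\<lambda>\<omega>. Mop Y \<omega> - u \<omega>) | U u Y. (U,u) \<in> G \<and> Y \<in> Linf_pos M B \<and> (AE \<omega> in M. U \<omega> + Z \<omega> \<le> Y \<omega>)}"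
  have MopLA: "Y \<in> Linf_pos M B \<Longrightarrow> Mop Y \<in> Linf M A" for Y using MopA Linf_pos_Linf by blast
  have LoA: "l \<in> Lo \<Longrightarrow> l \<in> Linf M A" for l
    unfolding Lo_def using good_A[OF g] MopLA Linf_comb[of _ M A _ 1 "-1"] by fastforce
  have UpA: "v \<in> Up \<Longrightarrow> v \<in> Linf M A" for v
    unfolding Up_def using good_A[OF g] MopLA Linf_comb[of _ M A _ 1 "-1"] by fastforce
  have LoUp: "AE \<omega> in M. l \<omega> \<le> v \<omega>" if l: "l \<in> Lo" and v: "v \<in> Up" for l v
  proof -
    obtain W w Y' where lW: "l = (\<lambda>\<omega>. w \<omega> - Mop Y' \<omega>)" and W: "(W,w) \<in> G" and Y': "Y' \<in> Linf_pos M B"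
      and WY: "AE \<omega> in M. W \<omega> - Z \<omega> \<le> Y' \<omega>" using l unfolding Lo_def by (auto simp only: mem_Collect_eq)
    obtain U u Y where vU: "v = (\<lambda>\<omega>. Mop Y \<omega> - u \<omega>)" and U: "(U,u) \<in> G" and Y: "Y \<in> Linf_pos M B"
      and UY: "AE \<omega> in M. U \<omega> + Z \<omega> \<le> Y \<omega>" using v unfolding Up_def by (auto simp only: mem_Collect_eq)
    have WU: "W \<in> fst ` G" "U \<in> fst ` G" using W U by (simp_all add: rev_image_eqI)
    have "(\<lambda>\<eta>. 1 * W \<eta> + 1 * U \<eta>) \<in> fst ` G" by (rule good_comb[OF g WU])
    then obtain w2 where w2: "((\<lambda>\<eta>. 1 * W \<eta> + 1 * U \<eta>), w2) \<in> G" by auto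
    have e: "AE \<omega> in M. w2 \<omega> = 1 * w \<omega> + 1 * u \<omega>" by (rule good_lin[OF g W U w2])
    have YY: "(\<lambda>\<eta>. Y \<eta> + Y' \<eta>) \<in> Linf_pos M B" by (rule Linf_pos_add[OF Y Y'])
    have "AE \<omega> in M. (1 * W \<omega> + 1 * U \<omega>) \<le> Y \<omega> + Y' \<omega>" using WY UY by eventually_elim auto
    from good_dom[OF g w2 YY this] have d: "AE \<omega> in M. w2 \<omega> \<le> Mop (\<lambda>\<eta>. Y \<eta> + Y' \<eta>) \<omega>" .
    have s: "AE \<omega> in M. Mop (\<lambda>\<eta>. Y \<eta> + Y' \<eta>) \<omega> \<le> Mop Y \<omega> + Mop Y' \<omega>" by (rule Mop_add[OF Y Y'])
    show ?thesis using e d s unfolding lW vU by eventually_elim simp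
  qed
  have Z0: "(\<lambda>\<omega>. max 0 (- Z \<omega>)) \<in> Linf_pos M B" "(\<lambda>\<omega>. max 0 (Z \<omega>)) \<in> Linf_pos M B"
    using Linf_pos_max0 Linf_comb[OF ZB ZB, of "-1" 0] ZB by auto
  define l0 where "l0 = (\<lambda>\<omega>. u0 \<omega> - Mop (\<lambda>\<omega>. max 0 (- Z \<omega>)) \<omega>)"
  define v0 where "v0 = (\<lambda>\<omega>. Mop (\<lambda>\<omega>. max 0 (Z \<omega>)) \<omega> - u0 \<omega>)"
  have l0: "l0 \<in> Lo" unfolding Lo_def l0_def mem_Collect_eq
    apply (rule exI[of _ "\<lambda>_. 0"], rule exI[of _ u0], rule exI[of _ "\<lambda>\<omega>. max 0 (- Z \<omega>)"])
    using u0 Z0 by (auto intro!: AE_I2)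
  have v0: "v0 \<in> Up" unfolding Up_def v0_def mem_Collect_eq
    apply (rule exI[of _ "\<lambda>_. 0"], rule exI[of _ u0], rule exI[of _ "\<lambda>\<omega>. max 0 (Z \<omega>)"])
    using u0 Z0 by (auto intro!: AE_I2)
  have "\<exists>h \<in> borel_measurable A. (\<forall>f\<in>Lo. AE \<omega> in M. f \<omega> \<le> h \<omega>) \<and>
     (\<forall>u. (\<forall>f\<in>Lo. AE \<omega> in M. f \<omega> \<le> u \<omega>) \<longrightarrow> (AE \<omega> in M. h \<omega> \<le> u \<omega>))"
    apply (rule esssup_exists[OF P subA _ _ _ , where g=v0])
    using LoA l0 UpA[OF v0] LoUp[OF _ v0] by (auto dest: LinfD)
  then obtain c where cA: "c \<in> borel_measurable A" and cLo: "\<And>l. l \<in> Lo \<Longrightarrow> AE \<omega> in M. l \<omega> \<le> c \<omega>"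
    and cUp0: "\<And>u. (\<forall>f\<in>Lo. AE \<omega> in M. f \<omega> \<le> u \<omega>) \<Longrightarrow> (AE \<omega> in M. c \<omega> \<le> u \<omega>)" by blast
  have cUp: "v \<in> Up \<Longrightarrow> AE \<omega> in M. c \<omega> \<le> v \<omega>" for v using cUp0 LoUp by blast
  have cL: "c \<in> Linf M A"
  proof -
    obtain k1 where k1: "AE \<omega> in M. \<bar>l0 \<omega>\<bar> \<le> k1" using LoA[OF l0] by (rule LinfE)
    obtain k2 where k2: "AE \<omega> in M. \<bar>v0 \<omega>\<bar> \<le> k2" using UpA[OF v0] by (rule LinfE)
    show ?thesis
      apply (rule LinfI[where c="max k1 k2"])
      using cA apply simp
      using k1 k2 cLo[OF l0] cUp[OF v0] by eventually_elim auto
  qed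
  define G' where "G' = {((\<lambda>\<eta>. U \<eta> + t * Z \<eta>), (\<lambda>\<eta>. u \<eta> + t * c \<eta>)) | U u t. (U,u) \<in> G}"
  have GG': "G \<subseteq> G'"
  proof
    fix p assume "p \<in> G"
    then obtain U u where p: "p = (U,u)" "(U,u) \<in> G" by (cases p) auto
    then show "p \<in> G'" unfolding G'_def mem_Collect_eq
      by (intro exI[of _ U] exI[of _ u] exI[of _ 0]) simp
  qed
  have ZG': "Z \<in> fst ` G'"
  proof -
    have "((\<lambda>\<eta>. 0 + 1 * Z \<eta>), (\<lambda>\<eta>. u0 \<eta> + 1 * c \<eta>)) \<in> G'" unfolding G'_def mem_Collect_eq
      by (intro exI[of _ "\<lambda>_. 0"] exI[of _ u0] exI[of _ 1]) (simp add: u0)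
    then have "fst ((\<lambda>\<eta>. 0 + 1 * Z \<eta>), (\<lambda>\<eta>. u0 \<eta> + 1 * c \<eta>)) \<in> fst ` G'" by (rule imageI)
    then show ?thesis by simp
  qed
  have fG': "fst ` G' = {(\<lambda>\<eta>. U \<eta> + t * Z \<eta>) | U t. U \<in> fst ` G}"
    unfolding G'_def by force
  have G'E: "p \<in> G' \<Longrightarrow> (\<And>U u t. (U,u) \<in> G \<Longrightarrow> p = ((\<lambda>\<eta>. U \<eta> + t * Z \<eta>), (\<lambda>\<eta>. u \<eta> + t * c \<eta>)) \<Longrightarrow> R) \<Longrightarrow> R" for p R
    unfolding G'_def by blast
  have "good G'"
  proof (rule goodI)
    show "lin_subspace (fst ` G')" unfolding lin_subspace_def fG'
    proof (intro conjI ballI allI)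
      show "(\<lambda>_. 0) \<in> {(\<lambda>\<eta>. U \<eta> + t * Z \<eta>) | U t. U \<in> fst ` G}"
        using good_0[OF g] by (auto intro!: exI[of _ "\<lambda>_. 0"] exI[of _ 0])
    next
      fix X Y a b assume "X \<in> {(\<lambda>\<eta>. U \<eta> + t * Z \<eta>) | U t. U \<in> fst ` G}" "Y \<in> {(\<lambda>\<eta>. U \<eta> + t * Z \<eta>) | U t. U \<in> fst ` G}"
      then obtain U1 t1 U2 t2 where X: "X = (\<lambda>\<eta>. U1 \<eta> + t1 * Z \<eta>)" "U1 \<in> fst ` G"
        and Y: "Y = (\<lambda>\<eta>. U2 \<eta> + t2 * Z \<eta>)" "U2 \<in> fst ` G" by blast
      have "(\<lambda>\<eta>. a * U1 \<eta> + b * U2 \<eta>) \<in> fst ` G" using good_comb[OF g X(2) Y(2)] .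
      moreover have "(\<lambda>\<omega>. a * X \<omega> + b * Y \<omega>) = (\<lambda>\<eta>. (\<lambda>\<eta>. a * U1 \<eta> + b * U2 \<eta>) \<eta> + (a * t1 + b * t2) * Z \<eta>)"
        unfolding X Y by (auto simp: algebra_simps)
      ultimately show "(\<lambda>\<omega>. a * X \<omega> + b * Y \<omega>) \<in> {(\<lambda>\<eta>. U \<eta> + t * Z \<eta>) | U t. U \<in> fst ` G}"
        unfolding mem_Collect_eq by (intro exI[of _ "\<lambda>\<eta>. a * U1 \<eta> + b * U2 \<eta>"] exI[of _ "a * t1 + b * t2"]) simp
    qed
  next
    show "L \<subseteq> fst ` G'" using good_L[OF g] GG' by auto
  next
    show "fst ` G' \<subseteq> Linf M B"
    proof
      fix X assume "X \<in> fst ` G'"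
      then obtain U t where "X = (\<lambda>\<eta>. U \<eta> + t * Z \<eta>)" "U \<in> fst ` G" unfolding fG' by blast
      then show "X \<in> Linf M B" using Linf_comb[of U M B Z 1 t] good_B[OF g] ZB by auto
    qed
  next
    fix X w assume "(X,w) \<in> G'"
    then show "w \<in> Linf M A"
    proof (rule G'E)
      fix U u t assume "(U,u) \<in> G" "(X, w) = ((\<lambda>\<eta>. U \<eta> + t * Z \<eta>), (\<lambda>\<eta>. u \<eta> + t * c \<eta>))"
      then show ?thesis using Linf_comb[of u M A c 1 t] good_A[OF g] cL by auto
    qed
  next
    fix X w assume "(X,w) \<in> G'" "X \<in> L"
    from this(1) show "AE \<omega> in M. w \<omega> = x X \<omega>"
    proof (rule G'E)
      fix U u t assume Uu: "(U,u) \<in> G" and e: "(X, w) = ((\<lambda>\<eta>. U \<eta> + t * Z \<eta>), (\<lambda>\<eta>. u \<eta> + t * c \<eta>))"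
      have XG: "X \<in> fst ` G" using \<open>X \<in> L\<close> good_L[OF g] by auto
      have "(\<lambda>\<eta>. U \<eta> + t * Z \<eta>) = (\<lambda>\<eta>. X \<eta> + 0 * Z \<eta>)" using e by auto
      from uniq[OF g Z _ XG this] Uu have "t = 0 \<and> U = X" by force
      then have "w = u" "(X,u) \<in> G" using e Uu by auto
      then show ?thesis using good_x[OF g _ \<open>X \<in> L\<close>] by blast
    qed
  next
    fix X1 w1 X2 w2 a b w3 assume h1: "(X1,w1) \<in> G'" and h2: "(X2,w2) \<in> G'"
      and h3: "((\<lambda>\<eta>. a * X1 \<eta> + b * X2 \<eta>), w3) \<in> G'"
    obtain U1 u1 t1 where p1: "(U1,u1) \<in> G" "X1 = (\<lambda>\<eta>. U1 \<eta> + t1 * Z \<eta>)" "w1 = (\<lambda>\<eta>. u1 \<eta> + t1 * c \<eta>)"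
      using h1 by (rule G'E) auto
    obtain U2 u2 t2 where p2: "(U2,u2) \<in> G" "X2 = (\<lambda>\<eta>. U2 \<eta> + t2 * Z \<eta>)" "w2 = (\<lambda>\<eta>. u2 \<eta> + t2 * c \<eta>)"
      using h2 by (rule G'E) auto
    obtain U3 u3 t3 where p3: "(U3,u3) \<in> G" "(\<lambda>\<eta>. a * X1 \<eta> + b * X2 \<eta>) = (\<lambda>\<eta>. U3 \<eta> + t3 * Z \<eta>)" "w3 = (\<lambda>\<eta>. u3 \<eta> + t3 * c \<eta>)"
      using h3 by (rule G'E) auto
    have c12: "(\<lambda>\<eta>. a * U1 \<eta> + b * U2 \<eta>) \<in> fst ` G" using good_comb[OF g] p1(1) p2(1) by force
    have "(\<lambda>\<eta>. U3 \<eta> + t3 * Z \<eta>) = (\<lambda>\<eta>. (\<lambda>\<eta>. a * U1 \<eta> + b * U2 \<eta>) \<eta> + (a * t1 + b * t2) * Z \<eta>)"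
      unfolding p3(2)[symmetric] p1(2) p2(2) by (auto simp: algebra_simps)
    from uniq[OF g Z _ c12 this] p3(1) have tU: "t3 = a * t1 + b * t2" "U3 = (\<lambda>\<eta>. a * U1 \<eta> + b * U2 \<eta>)" by force+
    have "AE \<omega> in M. u3 \<omega> = a * u1 \<omega> + b * u2 \<omega>" using good_lin[OF g p1(1) p2(1)] p3(1) tU(2) by blast
    then show "AE \<omega> in M. w3 \<omega> = a * w1 \<omega> + b * w2 \<omega>"
      unfolding p1(3) p2(3) p3(3) tU(1) by eventually_elim (simp add: algebra_simps)
  next
    fix X w Y assume h: "(X,w) \<in> G'" and Y: "Y \<in> Linf_pos M B" and XY: "AE \<omega> in M. X \<omega> \<le> Y \<omega>"
    obtain U u t where p: "(U,u) \<in> G" "X = (\<lambda>\<eta>. U \<eta> + t * Z \<eta>)" "w = (\<lambda>\<eta>. u \<eta> + t * c \<eta>)"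
      using h by (rule G'E) auto
    show "AE \<omega> in M. w \<omega> \<le> Mop Y \<omega>"
    proof (cases "t = 0")
      case True
      then show ?thesis using good_dom[OF g p(1) Y] XY unfolding p by simp
    next
      case False
      define s where "s = \<bar>t\<bar>"
      have s: "0 < s" using False unfolding s_def by simp
      obtain u' where u': "((\<lambda>\<eta>. (1/s) * U \<eta>), u') \<in> G" "AE \<omega> in M. u' \<omega> = (1/s) * u \<omega>"
        using good_scale[OF g p(1)] by blast
      have Ys: "(\<lambda>\<eta>. (1/s) * Y \<eta>) \<in> Linf_pos M B" by (rule Linf_pos_scale[OF Y]) (use s in simp)
      have MYs: "AE \<omega> in M. Mop (\<lambda>\<eta>. (1/s) * Y \<eta>) \<omega> = (1/s) * Mop Y \<omega>" by (rule Mop_scale[OF Y]) (use s in simp)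
      show ?thesis
      proof (cases "t > 0")
        case True
        then have st: "s = t" unfolding s_def by simp
        have "AE \<omega> in M. (1/s) * U \<omega> + Z \<omega> \<le> (1/s) * Y \<omega>" using XY unfolding p
        proof eventually_elim
          case (elim \<omega>)
          then have "(1/s) * (U \<omega> + t * Z \<omega>) \<le> (1/s) * Y \<omega>" using s by (intro mult_left_mono) auto
          then show ?case using s st by (simp add: field_simps)
        qed
        then have "(\<lambda>\<omega>. Mop (\<lambda>\<eta>. (1/s) * Y \<eta>) \<omega> - u' \<omega>) \<in> Up" unfolding Up_def using u'(1) Ys by blast
        from cUp[OF this] show ?thesis using u'(2) MYs unfolding p
        proof eventually_elim
          case (elim \<omega>)
          then have "t * (u' \<omega> + c \<omega>) \<le> t * Mop (\<lambda>\<eta>. (1/s) * Y \<eta>) \<omega>" using True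
            by (intro mult_left_mono) auto
          then show ?case using elim st s by (simp add: field_simps)
        qed
      next
        case False
        then have st: "s = - t" "t < 0" using \<open>t \<noteq> 0\<close> unfolding s_def by auto
        have "AE \<omega> in M. (1/s) * U \<omega> - Z \<omega> \<le> (1/s) * Y \<omega>" using XY unfolding p
        proof eventually_elim
          case (elim \<omega>)
          then have "(1/s) * (U \<omega> + t * Z \<omega>) \<le> (1/s) * Y \<omega>" using s by (intro mult_left_mono) auto
          moreover have "(1/s) * U \<omega> - Z \<omega> = (1/s) * (U \<omega> + t * Z \<omega>)" using s st by (simp add: field_simps)
          ultimately show ?case by simp
        qed
        then have "(\<lambda>\<omega>. u' \<omega> - Mop (\<lambda>\<eta>. (1/s) * Y \<eta>) \<omega>) \<in> Lo" unfolding Lo_def using u'(1) Ys by blast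
        from cLo[OF this] show ?thesis using u'(2) MYs unfolding p
        proof eventually_elim
          case (elim \<omega>)
          then have "s * (u' \<omega> - Mop (\<lambda>\<eta>. (1/s) * Y \<eta>) \<omega>) \<le> s * c \<omega>" using s
            by (intro mult_left_mono) auto
          then show ?case using elim st s by (simp add: field_simps)
        qed
      qed
    qed
  qed
  then show ?thesis using GG' ZG' by blast
qed

end



context ext_setting begin

lemma exists_total: "\<exists>G. good G \<and> fst ` G = Linf M B"
proof -
  have "\<forall>C\<in>chains {G. good G}. \<exists>U\<in>{G. good G}. \<forall>X\<in>C. X \<subseteq> U"
  proof
    fix C assume C: "C \<in> chains {G. good G}"
    show "\<exists>U\<in>{G. good G}. \<forall>X\<in>C. X \<subseteq> U"
    proof (cases "C = {}")
      case True then show ?thesis using good_G0 by auto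
    next
      case False then show ?thesis using good_Union[OF C] by blast
    qed
  qed
  from Zorn_Lemma2[OF this] obtain Gm where Gm: "good Gm" and mx: "\<And>X. good X \<Longrightarrow> Gm \<subseteq> X \<Longrightarrow> X = Gm"
    by blast
  have "Linf M B \<subseteq> fst ` Gm"
  proof
    fix Z assume Z: "Z \<in> Linf M B"
    show "Z \<in> fst ` Gm"
    proof (rule ccontr)
      assume "Z \<notin> fst ` Gm"
      from extend[OF Gm Z this] obtain G' where "good G'" "Gm \<subseteq> G'" "Z \<in> fst ` G'" by blast
      then show False using mx \<open>Z \<notin> fst ` Gm\<close> by blast
    qed
  qed
  then show ?thesis using Gm good_B[OF Gm] by blast
qed

end

locale ext_total = ext_setting +
  fixes G assumes gG: "good G" and fG: "fst ` G = Linf M B"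
begin

definition xx where "xx X = (SOME u. (X,u) \<in> G)"

lemma xxG: "X \<in> Linf M B \<Longrightarrow> (X, xx X) \<in> G"
  unfolding xx_def using fG by (metis (mono_tags, lifting) image_iff prod.collapse someI_ex)

lemma xxA: "X \<in> Linf M B \<Longrightarrow> xx X \<in> Linf M A"
  using good_A[OF gG xxG] .

lemma xx_lin: assumes "X \<in> Linf M B" "Y \<in> Linf M B"
  shows "AE \<omega> in M. xx (\<lambda>\<eta>. a * X \<eta> + b * Y \<eta>) \<omega> = a * xx X \<omega> + b * xx Y \<omega>"
  using good_lin[OF gG xxG[OF assms(1)] xxG[OF assms(2)] xxG[OF Linf_comb[OF assms]]] .

lemma xx_dom: "X \<in> Linf M B \<Longrightarrow> Y \<in> Linf_pos M B \<Longrightarrow> (AE \<omega> in M. X \<omega> \<le> Y \<omega>) \<Longrightarrow> (AE \<omega> in M. xx X \<omega> \<le> Mop Y \<omega>)"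
  using good_dom[OF gG xxG] by blast

lemma xx_L: "X \<in> L \<Longrightarrow> AE \<omega> in M. xx X \<omega> = x X \<omega>"
  using good_x[OF gG xxG] LB by blast

lemma zeroB: "(\<lambda>_. 0::real) \<in> Linf_pos M B" unfolding Linf_pos_def by (auto intro: Linf_const)

lemma xx_mono: assumes X: "X \<in> Linf M B" and Y: "Y \<in> Linf M B" and le: "AE \<omega> in M. Y \<omega> \<le> X \<omega>"
  shows "AE \<omega> in M. xx Y \<omega> \<le> xx X \<omega>"
proof -
  have c: "(\<lambda>\<eta>. 1 * Y \<eta> + (-1) * X \<eta>) \<in> Linf M B" by (rule Linf_comb[OF Y X])
  have "AE \<omega> in M. 1 * Y \<omega> + (-1) * X \<omega> \<le> 0" using le by eventually_elim simp
  from xx_dom[OF c zeroB this] have "AE \<omega> in M. xx (\<lambda>\<eta>. 1 * Y \<eta> + (-1) * X \<eta>) \<omega> \<le> Mop (\<lambda>_. 0) \<omega>" .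
  then show ?thesis using Mop0 xx_lin[OF Y X, of 1 "-1"] by eventually_elim simp
qed

lemma xx_resp: "X \<in> Linf M B \<Longrightarrow> Y \<in> Linf M B \<Longrightarrow> (AE \<omega> in M. X \<omega> = Y \<omega>) \<Longrightarrow> AE \<omega> in M. xx X \<omega> = xx Y \<omega>"
proof -
  assume X: "X \<in> Linf M B" and Y: "Y \<in> Linf M B" and e: "AE \<omega> in M. X \<omega> = Y \<omega>"
  have "AE \<omega> in M. Y \<omega> \<le> X \<omega>" "AE \<omega> in M. X \<omega> \<le> Y \<omega>" using e by auto
  from xx_mono[OF X Y this(1)] xx_mono[OF Y X this(2)] show ?thesis by eventually_elim simp
qed

lemma xx_scale: assumes X: "X \<in> Linf M B" shows "AE \<omega> in M. xx (\<lambda>\<eta>. r * X \<eta>) \<omega> = r * xx X \<omega>"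
  using xx_lin[OF X X, of r 0] by simp

lemma xx_0: "AE \<omega> in M. xx (\<lambda>_. 0) \<omega> = 0"
  using xx_scale[OF Linf_pos_Linf[OF zeroB], of 0] by simp

lemma xx_cont: "cont_above_op M (Linf M B) xx"
  unfolding cont_above_op_def
proof (intro allI impI)
  fix Xs X assume XsB: "\<forall>n. Xs n \<in> Linf M B" and XB: "X \<in> Linf M B"
    and dec: "AE \<omega> in M. \<forall>n. Xs (Suc n) \<omega> \<le> Xs n \<omega>" and lim: "AE \<omega> in M. (\<lambda>n. Xs n \<omega>) \<longlonglongrightarrow> X \<omega>"
  define D where "D = (\<lambda>n \<eta>. 1 * Xs n \<eta> + (-1) * X \<eta>)"
  have DB: "D n \<in> Linf M B" for n unfolding D_def using XsB XB by (intro Linf_comb) auto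
  have ge: "AE \<omega> in M. \<forall>n. X \<omega> \<le> Xs n \<omega>" using dec lim
  proof eventually_elim
    case (elim \<omega>)
    then have "decseq (\<lambda>n. Xs n \<omega>)" by (simp add: decseq_Suc_iff)
    then show ?case using elim decseq_ge by blast
  qed
  have Dpos: "D n \<in> Linf_pos M B" for n
  proof -
    have "AE \<omega> in M. 0 \<le> D n \<omega>" using ge unfolding D_def by eventually_elim auto
    then show ?thesis using DB unfolding Linf_pos_def by auto
  qed
  have Ddec: "AE \<omega> in M. \<forall>n. D (Suc n) \<omega> \<le> D n \<omega>" using dec unfolding D_def by eventually_elim auto
  have Dlim: "AE \<omega> in M. (\<lambda>n. D n \<omega>) \<longlonglongrightarrow> 0" using lim unfolding D_def
    by eventually_elim (drule LIM_zero, simp)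
  have MD: "AE \<omega> in M. (\<lambda>n. Mop (D n) \<omega>) \<longlonglongrightarrow> 0"
    using reg Dpos Ddec Dlim unfolding regular_op_def by blast
  have e1: "AE \<omega> in M. \<forall>n. xx (D n) \<omega> = xx (Xs n) \<omega> - xx X \<omega>"
    unfolding AE_all_countable D_def using xx_lin[OF _ XB, of "Xs n" 1 "-1" for n] XsB by simp
  have e2: "AE \<omega> in M. \<forall>n. xx (D n) \<omega> \<le> Mop (D n) \<omega>"
    unfolding AE_all_countable using xx_dom[OF DB Dpos] by auto
  have e3: "AE \<omega> in M. \<forall>n. xx (\<lambda>_. 0) \<omega> \<le> xx (D n) \<omega>"
    unfolding AE_all_countable using xx_mono[OF DB Linf_pos_Linf[OF zeroB]] Dpos unfolding Linf_pos_def by auto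
  have e4: "AE \<omega> in M. \<forall>n. xx (Xs (Suc n)) \<omega> \<le> xx (Xs n) \<omega>"
    unfolding AE_all_countable
  proof
    fix n
    have "AE \<omega> in M. Xs (Suc n) \<omega> \<le> Xs n \<omega>" using dec by auto
    then show "AE \<omega> in M. xx (Xs (Suc n)) \<omega> \<le> xx (Xs n) \<omega>" using xx_mono XsB by blast
  qed
  show "AE \<omega> in M. (\<forall>n. xx (Xs (Suc n)) \<omega> \<le> xx (Xs n) \<omega>) \<and> (\<lambda>n. xx (Xs n) \<omega>) \<longlonglongrightarrow> xx X \<omega>"
    using MD e1 e2 e3 e4 xx_0
  proof eventually_elim
    case (elim \<omega>)
    have "(\<lambda>n. xx (D n) \<omega>) \<longlonglongrightarrow> 0"
    proof (rule tendsto_sandwich[of "\<lambda>_. 0" _ _ "\<lambda>n. Mop (D n) \<omega>"])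
      show "\<forall>\<^sub>F n in sequentially. 0 \<le> xx (D n) \<omega>" using elim by auto
      show "\<forall>\<^sub>F n in sequentially. xx (D n) \<omega> \<le> Mop (D n) \<omega>" using elim by auto
    qed (use elim in auto)
    then have "(\<lambda>n. xx (Xs n) \<omega> - xx X \<omega>) \<longlonglongrightarrow> 0" using elim by simp
    then have "(\<lambda>n. xx (Xs n) \<omega>) \<longlonglongrightarrow> xx X \<omega>" by (rule LIM_zero_cancel)
    then show ?case using elim by simp
  qed
qed

end



lemma small_zero:
  fixes d K :: real
  assumes h: "\<And>n::nat. \<bar>d\<bar> \<le> 2 * (1 / (real n + 1)) * K"
  shows "d = 0"
proof (rule ccontr)
  assume d: "d \<noteq> 0"
  then have dp: "0 < \<bar>d\<bar>" by simp
  obtain n :: nat where n: "2 * K / \<bar>d\<bar> < real n" using reals_Archimedean2 by blast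
  then have "2 * K < real n * \<bar>d\<bar>" using dp by (simp add: divide_less_eq)
  also have "\<dots> < (real n + 1) * \<bar>d\<bar>" using dp by (simp add: distrib_right)
  finally have "2 * (1 / (real n + 1)) * K < \<bar>d\<bar>" by (simp add: field_simps)
  with h[of n] show False by simp
qed

context ext_total begin

lemma indB: "S \<in> sets A \<Longrightarrow> (\<lambda>\<eta>. indicator S \<eta> :: real) \<in> Linf M B"
  using AB by (intro LinfI[where c=1]) (auto intro!: AE_I2 borel_measurable_indicator simp: indicator_def)

lemma ISB: "S \<in> sets A \<Longrightarrow> X \<in> Linf M B \<Longrightarrow> (\<lambda>\<eta>. indicator S \<eta> * X \<eta>) \<in> Linf M B"
  by (rule Linf_mult[OF indB])

lemma ISposB: "S \<in> sets A \<Longrightarrow> X \<in> Linf_pos M B \<Longrightarrow> (\<lambda>\<eta>. indicator S \<eta> * X \<eta>) \<in> Linf_pos M B"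
  unfolding Linf_pos_def using ISB by (auto elim!: eventually_mono)

lemma ind_off: assumes S: "S \<in> sets A" and X: "X \<in> Linf M B"
  shows "AE \<omega> in M. \<omega> \<notin> S \<longrightarrow> xx (\<lambda>\<eta>. indicator S \<eta> * X \<eta>) \<omega> = 0"
proof -
  define Xp where "Xp = (\<lambda>\<eta>. max 0 (X \<eta>))"
  define Xm where "Xm = (\<lambda>\<eta>. max 0 (- X \<eta>))"
  have XpB: "Xp \<in> Linf_pos M B" unfolding Xp_def by (rule Linf_pos_max0[OF X])
  have XmB: "Xm \<in> Linf_pos M B" unfolding Xm_def using Linf_pos_max0[OF Linf_comb[OF X X, of "-1" 0]] by simp
  have ISX: "(\<lambda>\<eta>. indicator S \<eta> * X \<eta>) \<in> Linf M B" by (rule ISB[OF S X])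
  have nISX: "(\<lambda>\<eta>. (-1) * (indicator S \<eta> * X \<eta>)) \<in> Linf M B" using Linf_comb[OF ISX ISX, of "-1" 0] by simp
  have a1: "AE \<omega> in M. xx (\<lambda>\<eta>. indicator S \<eta> * X \<eta>) \<omega> \<le> Mop (\<lambda>\<eta>. indicator S \<eta> * Xp \<eta>) \<omega>"
    by (rule xx_dom[OF ISX ISposB[OF S XpB]]) (auto intro!: AE_I2 mult_left_mono simp: Xp_def)
  have a2: "AE \<omega> in M. Mop (\<lambda>\<eta>. indicator S \<eta> * Xp \<eta>) \<omega> = indicator S \<omega> * Mop Xp \<omega>"
    using whom S XpB unfolding weak_homogeneous_op_def by blast
  have b1: "AE \<omega> in M. xx (\<lambda>\<eta>. (-1) * (indicator S \<eta> * X \<eta>)) \<omega> \<le> Mop (\<lambda>\<eta>. indicator S \<eta> * Xm \<eta>) \<omega>"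
    by (rule xx_dom[OF nISX ISposB[OF S XmB]]) (auto intro!: AE_I2 simp: Xm_def indicator_def)
  have b2: "AE \<omega> in M. Mop (\<lambda>\<eta>. indicator S \<eta> * Xm \<eta>) \<omega> = indicator S \<omega> * Mop Xm \<omega>"
    using whom S XmB unfolding weak_homogeneous_op_def by blast
  have b3: "AE \<omega> in M. xx (\<lambda>\<eta>. (-1) * (indicator S \<eta> * X \<eta>)) \<omega> = (-1) * xx (\<lambda>\<eta>. indicator S \<eta> * X \<eta>) \<omega>"
    by (rule xx_scale[OF ISX])
  show ?thesis using a1 a2 b1 b2 b3 by eventually_elim auto
qed

lemma ind_hom: assumes S: "S \<in> sets A" and X: "X \<in> Linf M B"
  shows "AE \<omega> in M. xx (\<lambda>\<eta>. indicator S \<eta> * X \<eta>) \<omega> = indicator S \<omega> * xx X \<omega>"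
proof -
  define S' where "S' = space M - S"
  have S': "S' \<in> sets A" unfolding S'_def using S spaceA by (metis sets.compl_sets)
  have ISX: "(\<lambda>\<eta>. indicator S \<eta> * X \<eta>) \<in> Linf M B" by (rule ISB[OF S X])
  have ISX': "(\<lambda>\<eta>. indicator S' \<eta> * X \<eta>) \<in> Linf M B" by (rule ISB[OF S' X])
  have X'B: "(\<lambda>\<eta>. 1 * (indicator S \<eta> * X \<eta>) + 1 * (indicator S' \<eta> * X \<eta>)) \<in> Linf M B"
    by (rule Linf_comb[OF ISX ISX'])
  have "AE \<omega> in M. X \<omega> = 1 * (indicator S \<omega> * X \<omega>) + 1 * (indicator S' \<omega> * X \<omega>)"
    using AE_space by eventually_elim (auto simp: S'_def indicator_def)
  from xx_resp[OF X X'B this] have e1: "AE \<omega> in M. xx X \<omega> = xx (\<lambda>\<eta>. 1 * (indicator S \<eta> * X \<eta>) + 1 * (indicator S' \<eta> * X \<eta>)) \<omega>" .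
  have e2: "AE \<omega> in M. xx (\<lambda>\<eta>. 1 * (indicator S \<eta> * X \<eta>) + 1 * (indicator S' \<eta> * X \<eta>)) \<omega>
      = 1 * xx (\<lambda>\<eta>. indicator S \<eta> * X \<eta>) \<omega> + 1 * xx (\<lambda>\<eta>. indicator S' \<eta> * X \<eta>) \<omega>"
    by (rule xx_lin[OF ISX ISX'])
  show ?thesis using e1 e2 ind_off[OF S X] ind_off[OF S' X] AE_space
    by eventually_elim (auto simp: S'_def indicator_def)
qed

end



lemma arith_bound:
  fixes q y t e K :: real
  assumes "\<bar>q\<bar> \<le> e * K" "\<bar>y\<bar> \<le> K" "0 \<le> t" "t \<le> e"
  shows "\<bar>q - t * y\<bar> \<le> 2 * e * K"
proof -
  have "\<bar>t * y\<bar> = t * \<bar>y\<bar>" using assms(3) by (simp add: abs_mult)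
  also have "\<dots> \<le> e * K" using assms by (intro mult_mono) auto
  finally have "\<bar>t * y\<bar> \<le> e * K" .
  then show ?thesis using assms(1) abs_triangle_ineq4[of q "t * y"] by linarith
qed

lemma floor_cell:
  fixes r :: real and n :: nat
  shows "real_of_int \<lfloor>r * (real n + 1)\<rfloor> / (real n + 1) \<le> r \<and>
         r < real_of_int \<lfloor>r * (real n + 1)\<rfloor> / (real n + 1) + 1 / (real n + 1)"
proof -
  have p: "0 < real n + 1" by simp
  have a: "real_of_int \<lfloor>r * (real n + 1)\<rfloor> \<le> r * (real n + 1)" by simp
  have b: "r * (real n + 1) < real_of_int \<lfloor>r * (real n + 1)\<rfloor> + 1" by simp
  show ?thesis using a b p by (simp add: divide_le_eq less_divide_eq add_divide_distrib[symmetric])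
qed

context ext_total begin

lemma xx_hom: assumes l: "l \<in> Linf_pos M A" and X: "X \<in> Linf M B"
  shows "AE \<omega> in M. xx (\<lambda>\<eta>. l \<eta> * X \<eta>) \<omega> = l \<omega> * xx X \<omega>"
proof -
  have lA: "l \<in> Linf M A" using l by (rule Linf_pos_Linf)
  have lm[measurable]: "l \<in> borel_measurable A" using lA by (rule LinfD)
  have lB: "l \<in> Linf M B" using lA by (rule LinfAB)
  have lX: "(\<lambda>\<eta>. l \<eta> * X \<eta>) \<in> Linf M B" by (rule Linf_mult[OF lB X])
  have aX: "(\<lambda>\<eta>. \<bar>X \<eta>\<bar>) \<in> Linf M B" by (rule Linf_abs[OF X])
  have nX: "(\<lambda>\<eta>. (-1) * X \<eta>) \<in> Linf M B" using Linf_comb[OF X X, of "-1" 0] by simp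
  define Sf where "Sf = (\<lambda>(n::nat) (k::int). {\<omega> \<in> space M. real_of_int k / (real n + 1) \<le> l \<omega> \<and>
        l \<omega> < real_of_int k / (real n + 1) + 1 / (real n + 1)})"
  have key: "AE \<omega> in M. \<omega> \<in> Sf n k \<longrightarrow> \<bar>xx (\<lambda>\<eta>. l \<eta> * X \<eta>) \<omega> - l \<omega> * xx X \<omega>\<bar> \<le> 2 * (1 / (real n + 1)) * xx (\<lambda>\<eta>. \<bar>X \<eta>\<bar>) \<omega>"
    for n k
  proof -
    define e where "e = 1 / (real n + 1)"
    define a where "a = real_of_int k / (real n + 1)"
    define S where "S = Sf n k"
    have e0: "0 < e" unfolding e_def by simp
    have Sdef: "S = {\<omega> \<in> space A. a \<le> l \<omega> \<and> l \<omega> < a + e}" unfolding S_def Sf_def a_def e_def spaceA by simp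
    have S: "S \<in> sets A" unfolding Sdef by measurable
    define Q where "Q = (\<lambda>\<eta>. 1 * (l \<eta> * X \<eta>) + (-a) * X \<eta>)"
    have QB: "Q \<in> Linf M B" unfolding Q_def by (rule Linf_comb[OF lX X])
    define IA where "IA = (\<lambda>\<eta>. indicator S \<eta> * \<bar>X \<eta>\<bar>)"
    have IAB: "IA \<in> Linf M B" unfolding IA_def by (rule ISB[OF S aX])
    have ISQ: "(\<lambda>\<eta>. indicator S \<eta> * Q \<eta>) \<in> Linf M B" by (rule ISB[OF S QB])
    have eIA: "(\<lambda>\<eta>. e * IA \<eta>) \<in> Linf M B" using Linf_comb[OF IAB IAB, of e 0] by simp
    have meIA: "(\<lambda>\<eta>. (-e) * IA \<eta>) \<in> Linf M B" using Linf_comb[OF IAB IAB, of "-e" 0] by simp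
    have pt: "\<bar>indicator S \<eta> * Q \<eta>\<bar> \<le> e * IA \<eta>" for \<eta>
    proof (cases "\<eta> \<in> S")
      case True
      then have t: "a \<le> l \<eta>" "l \<eta> < a + e" unfolding Sdef by auto
      have "indicator S \<eta> * Q \<eta> = (l \<eta> - a) * X \<eta>" using True unfolding Q_def by (simp add: algebra_simps)
      moreover have "\<bar>(l \<eta> - a) * X \<eta>\<bar> \<le> e * \<bar>X \<eta>\<bar>" using t by (simp add: abs_mult mult_right_mono)
      ultimately show ?thesis using True unfolding IA_def by simp
    next
      case False then show ?thesis unfolding IA_def by simp
    qed
    have f1: "AE \<omega> in M. xx Q \<omega> = 1 * xx (\<lambda>\<eta>. l \<eta> * X \<eta>) \<omega> + (-a) * xx X \<omega>"
      unfolding Q_def by (rule xx_lin[OF lX X])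
    have f2: "AE \<omega> in M. xx (\<lambda>\<eta>. indicator S \<eta> * Q \<eta>) \<omega> = indicator S \<omega> * xx Q \<omega>" by (rule ind_hom[OF S QB])
    have f3: "AE \<omega> in M. xx (\<lambda>\<eta>. indicator S \<eta> * Q \<eta>) \<omega> \<le> xx (\<lambda>\<eta>. e * IA \<eta>) \<omega>"
      by (rule xx_mono[OF eIA ISQ]) (use pt abs_le_iff in \<open>auto intro!: AE_I2\<close>)
    have f4: "AE \<omega> in M. xx (\<lambda>\<eta>. e * IA \<eta>) \<omega> = e * xx IA \<omega>" by (rule xx_scale[OF IAB])
    have f5: "AE \<omega> in M. xx IA \<omega> = indicator S \<omega> * xx (\<lambda>\<eta>. \<bar>X \<eta>\<bar>) \<omega>" unfolding IA_def by (rule ind_hom[OF S aX])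
    have pt2: "(-e) * IA \<eta> \<le> indicator S \<eta> * Q \<eta>" for \<eta> using pt[of \<eta>] unfolding abs_le_iff by linarith
    have f6: "AE \<omega> in M. xx (\<lambda>\<eta>. (-e) * IA \<eta>) \<omega> \<le> xx (\<lambda>\<eta>. indicator S \<eta> * Q \<eta>) \<omega>"
      by (rule xx_mono[OF ISQ meIA]) (use pt2 in \<open>auto intro!: AE_I2\<close>)
    have f7: "AE \<omega> in M. xx (\<lambda>\<eta>. (-e) * IA \<eta>) \<omega> = (-e) * xx IA \<omega>" by (rule xx_scale[OF IAB])
    have f8: "AE \<omega> in M. xx X \<omega> \<le> xx (\<lambda>\<eta>. \<bar>X \<eta>\<bar>) \<omega>" by (rule xx_mono[OF aX X]) (auto intro!: AE_I2)
    have f9: "AE \<omega> in M. xx (\<lambda>\<eta>. (-1) * X \<eta>) \<omega> \<le> xx (\<lambda>\<eta>. \<bar>X \<eta>\<bar>) \<omega>" by (rule xx_mono[OF aX nX]) (auto intro!: AE_I2)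
    have f10: "AE \<omega> in M. xx (\<lambda>\<eta>. (-1) * X \<eta>) \<omega> = (-1) * xx X \<omega>" by (rule xx_scale[OF X])
    show ?thesis using f1 f2 f3 f4 f5 f6 f7 f8 f9 f10
    proof eventually_elim
      case (elim \<omega>)
      show ?case
      proof
        assume "\<omega> \<in> Sf n k"
        then have w: "\<omega> \<in> S" and t: "a \<le> l \<omega>" "l \<omega> < a + e" unfolding S_def Sf_def a_def e_def by auto
        have q: "\<bar>xx Q \<omega>\<bar> \<le> e * xx (\<lambda>\<eta>. \<bar>X \<eta>\<bar>) \<omega>" using elim w by (simp add: abs_le_iff)
        have y: "\<bar>xx X \<omega>\<bar> \<le> xx (\<lambda>\<eta>. \<bar>X \<eta>\<bar>) \<omega>" using elim by (simp add: abs_le_iff)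
        have "\<bar>xx Q \<omega> - (l \<omega> - a) * xx X \<omega>\<bar> \<le> 2 * e * xx (\<lambda>\<eta>. \<bar>X \<eta>\<bar>) \<omega>"
          using arith_bound[OF q y] t by simp
        moreover have "xx Q \<omega> - (l \<omega> - a) * xx X \<omega> = xx (\<lambda>\<eta>. l \<eta> * X \<eta>) \<omega> - l \<omega> * xx X \<omega>"
          using elim by (simp add: algebra_simps)
        ultimately show "\<bar>xx (\<lambda>\<eta>. l \<eta> * X \<eta>) \<omega> - l \<omega> * xx X \<omega>\<bar> \<le> 2 * (1 / (real n + 1)) * xx (\<lambda>\<eta>. \<bar>X \<eta>\<bar>) \<omega>"
          unfolding e_def by simp
      qed
    qed
  qed
  have "AE \<omega> in M. \<forall>n k. \<omega> \<in> Sf n k \<longrightarrow> \<bar>xx (\<lambda>\<eta>. l \<eta> * X \<eta>) \<omega> - l \<omega> * xx X \<omega>\<bar> \<le> 2 * (1 / (real n + 1)) * xx (\<lambda>\<eta>. \<bar>X \<eta>\<bar>) \<omega>"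
    unfolding AE_all_countable using key by blast
  then show ?thesis using AE_space
  proof eventually_elim
    case (elim \<omega>)
    have "\<bar>xx (\<lambda>\<eta>. l \<eta> * X \<eta>) \<omega> - l \<omega> * xx X \<omega>\<bar> \<le> 2 * (1 / (real n + 1)) * xx (\<lambda>\<eta>. \<bar>X \<eta>\<bar>) \<omega>" for n
    proof -
      have "\<omega> \<in> Sf n \<lfloor>l \<omega> * (real n + 1)\<rfloor>" unfolding Sf_def using elim floor_cell[of "l \<omega>" n] by simp
      then show ?thesis using elim by blast
    qed
    then show ?case using small_zero by fastforce
  qed
qed

end

theorem theorem3p10:
  fixes M A B :: "'a measure"
    and L :: "('a \<Rightarrow> real) set"
    and x Mop :: "('a \<Rightarrow> real) \<Rightarrow> ('a \<Rightarrow> real)"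
  assumes "prob_space M" and "complete_measure M"
    and "subalgebra M A" and "subalgebra M B" and "sets A \<subseteq> sets B"
    and "\<exists>C. countable C \<and> C \<subseteq> sets M \<and> sets B = sigma_sets (space M) (C \<union> null_sets M)"
    and "lin_subspace L" and "L \<subseteq> Linf M B"
    and "\<forall>X\<in>L. x X \<in> Linf M A"
    and "linear_op M L x" and "monotone_op M L x"
    and "\<forall>Y\<in>Linf_pos M B. Mop Y \<in> Linf_pos M A"
    and "respects_ae M (Linf_pos M B) Mop"
    and "regular_op M (Linf_pos M B) Mop"
    and "weak_homogeneous_op M A (Linf_pos M B) Mop"
    and "sublinear_op M (Linf_pos M B) Mop"
    and "\<forall>X\<in>L. \<forall>Y\<in>Linf_pos M B. (AE \<omega> in M. X \<omega> \<le> Y \<omega>) \<longrightarrow> (AE \<omega> in M. x X \<omega> \<le> Mop Y \<omega>)"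
  shows "\<exists>x'. (\<forall>X\<in>Linf M B. x' X \<in> Linf M A)
    \<and> (\<forall>X\<in>L. AE \<omega> in M. x' X \<omega> = x X \<omega>)
    \<and> linear_op M (Linf M B) x' \<and> monotone_op M (Linf M B) x'
    \<and> (\<forall>X\<in>Linf M B. \<forall>Y\<in>Linf_pos M B. (AE \<omega> in M. X \<omega> \<le> Y \<omega>) \<longrightarrow> (AE \<omega> in M. x' X \<omega> \<le> Mop Y \<omega>))
    \<and> cont_above_op M (Linf M B) x'
    \<and> homogeneous_op M A (Linf M B) x'"
proof -
  have ES: "ext_setting M A B L x Mop"
    using assms(1,3,4,5,7,8,9,10,12,14,15,16,17) unfolding ext_setting_def by blast
  interpret E: ext_setting M A B L x Mop by (rule ES)
  obtain G where G: "E.good G" "fst ` G = Linf M B" using E.exists_total by blast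
  interpret T: ext_total M A B L x Mop G using ES G unfolding ext_total_def ext_total_axioms_def by blast
  show ?thesis
  proof (intro exI[of _ T.xx] conjI)
    show "\<forall>X\<in>Linf M B. T.xx X \<in> Linf M A" using T.xxA by blast
    show "\<forall>X\<in>L. AE \<omega> in M. T.xx X \<omega> = x X \<omega>" using T.xx_L by blast
    show "linear_op M (Linf M B) T.xx" unfolding linear_op_def using T.xx_lin by blast
    show "monotone_op M (Linf M B) T.xx" unfolding monotone_op_def using T.xx_mono by blast
    show "\<forall>X\<in>Linf M B. \<forall>Y\<in>Linf_pos M B. (AE \<omega> in M. X \<omega> \<le> Y \<omega>) \<longrightarrow> (AE \<omega> in M. T.xx X \<omega> \<le> Mop Y \<omega>)"
      using T.xx_dom by blast
    show "cont_above_op M (Linf M B) T.xx" by (rule T.xx_cont)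
    show "homogeneous_op M A (Linf M B) T.xx" unfolding homogeneous_op_def using T.xx_hom by blast
  qed
qed

end
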